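(* Let $p$ be a prime, $f\in\mathbb{Z}_p[x]$, $n\ge1$, let $\sigma=(x_1,\dots,x_k)$ be a $k$-cycle of $f_n$ (with representatives $x_i\in\mathbb{Z}_p$), and let $\tilde\sigma$ be a lift of $\sigma$ of length $kr$, $r\ge1$. Put $a_n(x)=(f^k)'(x)$, $b_n(x)=(f^k(x)-x)/p^n$, $a_{n+1}(x)=(f^{kr})'(x)$, $b_{n+1}(x)=(f^{kr}(x)-x)/p^{n+1}$. Then for all $1\le i\le k$ and $0\le t\le p-1$, $$a_{n+1}(x_i+p^nt)\equiv a_n(x_i)^r\pmod{p^n},$$ $$p\,b_{n+1}(x_i+p^nt)\equiv t\big(a_n(x_i)^r-1\big)+b_n(x_i)\big(1+a_n(x_i)+\dots+a_n(x_i)^{r-1}\big)\pmod{p^n}.$$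
   Context: $f_n$ is the induced map on $\mathbb{Z}/p^n\mathbb{Z}$, $f_n(x\bmod p^n)=f(x)\bmod p^n$. A $k$-cycle of $f_n$ is a tuple of distinct elements $x_1,\dots,x_k$ with $f_n(x_i)=x_{i+1}$, $f_n(x_k)=x_1$. The lifts of $\sigma$ are the cycles of $f_{n+1}$ contained in $\{y\in\mathbb{Z}/p^{n+1}\mathbb{Z}:y\bmod p^n\in\sigma\}$; their lengths are multiples of $k$. *)

theory Defs
  imports "HOL-Computational_Algebra.Computational_Algebra" "HOL-Library.Cardinality"
begin

text \<open>The prime p is encoded as the cardinality of a type of sort prime_card_type,
  in the style of the AFP mod_ring construction.\<close>

class prime_card_type = finite +
  assumes prime_card_type: "prime (CARD('a))"

lemma card_ge2: "2 \<le> CARD('a::prime_card_type)"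
  using prime_card_type[where 'a='a] prime_ge_2_nat by blast

definition padic_seq :: "int \<Rightarrow> (nat \<Rightarrow> int) \<Rightarrow> bool" where
  "padic_seq q x \<longleftrightarrow> (\<forall>m. 0 \<le> x m \<and> x m < q ^ m \<and> x (Suc m) mod q ^ m = x m)"

typedef (overloaded) ('p::prime_card_type) padic =
  "{x :: nat \<Rightarrow> int. padic_seq (int CARD('p)) x}"
  morphisms rep_padic Abs_padic
  by (rule exI[of _ "\<lambda>_. 0"]) (simp add: padic_seq_def)

setup_lifting type_definition_padic

lemma mod_Suc_pow: "(a::int) mod (q ^ Suc m) mod q ^ m = a mod q ^ m"
  by (simp add: mod_mod_cancel)

lemma padic_seq_op:
  assumes q: "q > 0"
    and hx: "padic_seq q x" and hy: "padic_seq q y"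
    and op: "\<And>m a b. op (a mod q ^ m) (b mod q ^ m) mod q ^ m = op a b mod q ^ m"
  shows "padic_seq q (\<lambda>m. op (x m) (y m) mod q ^ m)"
  unfolding padic_seq_def
proof
  fix m
  have "op (x (Suc m)) (y (Suc m)) mod q ^ Suc m mod q ^ m
      = op (x (Suc m) mod q ^ m) (y (Suc m) mod q ^ m) mod q ^ m"
    by (simp only: mod_Suc_pow op)
  also have "\<dots> = op (x m) (y m) mod q ^ m" using hx hy by (simp add: padic_seq_def)
  finally show "0 \<le> op (x m) (y m) mod q ^ m \<and> op (x m) (y m) mod q ^ m < q ^ m \<and>
      op (x (Suc m)) (y (Suc m)) mod q ^ Suc m mod q ^ m = op (x m) (y m) mod q ^ m"
    using q by simp
qed

instantiation padic :: (prime_card_type) comm_ring_1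
begin

lift_definition zero_padic :: "'a padic" is "\<lambda>m. 0" by (simp add: padic_seq_def)

lift_definition one_padic :: "'a padic" is "\<lambda>m. 1 mod int CARD('a) ^ m"
  unfolding padic_seq_def by (simp only: mod_Suc_pow) simp

lift_definition plus_padic :: "'a padic \<Rightarrow> 'a padic \<Rightarrow> 'a padic"
  is "\<lambda>x y m. (x m + y m) mod int CARD('a) ^ m"
  by (rule padic_seq_op[where op="(+)"]) (simp_all add: mod_add_eq)

lift_definition uminus_padic :: "'a padic \<Rightarrow> 'a padic"
  is "\<lambda>x m. (- x m) mod int CARD('a) ^ m"
  by (rule padic_seq_op[where op="\<lambda>a b. - a"]) (simp_all add: mod_minus_eq)

lift_definition minus_padic :: "'a padic \<Rightarrow> 'a padic \<Rightarrow> 'a padic"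
  is "\<lambda>x y m. (x m - y m) mod int CARD('a) ^ m"
  by (rule padic_seq_op[where op="(-)"]) (simp_all add: mod_diff_eq)

lift_definition times_padic :: "'a padic \<Rightarrow> 'a padic \<Rightarrow> 'a padic"
  is "\<lambda>x y m. (x m * y m) mod int CARD('a) ^ m"
  by (rule padic_seq_op[where op="(*)"]) (simp_all add: mod_mult_eq)

instance
proof
  fix a b c :: "'a padic"
  show "a * b * c = a * (b * c)"
    by transfer (rule ext, metis mod_mult_left_eq mod_mult_right_eq mult.assoc)
  show "a * b = b * a" by transfer (rule ext, metis mult.commute)
  show "1 * a = a"
    by transfer (rule ext, metis mod_mult_left_eq mult_1 mod_pos_pos_trivial padic_seq_def)
  show "a + b + c = a + (b + c)"
    by transfer (rule ext, metis mod_add_left_eq mod_add_right_eq add.assoc)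
  show "a + b = b + a" by transfer (rule ext, metis add.commute)
  show "0 + a = a" by transfer (rule ext, metis add_0 mod_pos_pos_trivial padic_seq_def)
  show "- a + a = 0" by transfer (rule ext, metis mod_add_left_eq add.left_inverse mod_0)
  show "a - b = a + - b" by transfer (rule ext, metis mod_add_right_eq diff_conv_add_uminus)
  show "(a + b) * c = a * c + b * c"
    by transfer (rule ext, metis mod_mult_left_eq mod_add_eq distrib_right)
  show "(0::'a padic) \<noteq> 1"
  proof transfer
    have "(1::int) mod int CARD('a) ^ 1 = 1" using card_ge2[where 'a='a] by simp
    then show "(\<lambda>m. 0::int) \<noteq> (\<lambda>m. 1 mod int CARD('a) ^ m)" by (metis zero_neq_one)
  qed
qed

end

lemma padic_seq_mod_le:
  assumes "padic_seq q x" "(0::int) < q" "m \<le> M"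
  shows "x M mod q ^ m = x m"
  using assms(3)
proof (induction M rule: dec_induct)
  case base
  show ?case using assms(1) by (simp add: padic_seq_def)
next
  case (step M)
  have "x (Suc M) mod q ^ m = x (Suc M) mod q ^ M mod q ^ m"
    using step.hyps(1) by (simp add: mod_mod_cancel le_imp_power_dvd)
  also have "x (Suc M) mod q ^ M = x M" using assms(1) by (simp add: padic_seq_def)
  finally show ?case using step.IH by simp
qed

lemma padic_seq_val:
  assumes "padic_seq q x" "(0::int) < q" "x \<noteq> (\<lambda>m. 0)"
  obtains a where "a \<ge> 1" "\<And>M. M \<ge> a \<Longrightarrow> q ^ (a - 1) dvd x M \<and> \<not> q ^ a dvd x M"
proof -
  have ex: "\<exists>m. x m \<noteq> 0" using assms(3) by auto
  define a where "a = (LEAST m. x m \<noteq> 0)"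
  have xa: "x a \<noteq> 0" unfolding a_def using ex by (rule LeastI_ex)
  have x0: "x 0 = 0" using assms(1) unfolding padic_seq_def
    by (metis int_one_le_iff_zero_less less_le not_less power_0 zero_less_one)
  have a1: "a \<ge> 1" using xa x0 by (cases a) auto
  have xa1: "x (a - 1) = 0"
  proof -
    have "a - 1 < (LEAST m. x m \<noteq> 0)" using a1 unfolding a_def[symmetric] by simp
    then show ?thesis using not_less_Least by blast
  qed
  show ?thesis
  proof (rule that[OF a1])
    fix M assume M: "M \<ge> a"
    have "x M mod q ^ (a - 1) = 0"
      using padic_seq_mod_le[OF assms(1,2), of "a - 1" M] M xa1 by simp
    moreover have "x M mod q ^ a \<noteq> 0"
      using padic_seq_mod_le[OF assms(1,2) M] xa by simp
    ultimately show "q ^ (a - 1) dvd x M \<and> \<not> q ^ a dvd x M" by auto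
  qed
qed

lemma padic_seq_no_zero_div:
  assumes q: "prime (q::int)" and hx: "padic_seq q x" and hy: "padic_seq q y"
    and nx: "x \<noteq> (\<lambda>m. 0)" and ny: "y \<noteq> (\<lambda>m. 0)"
  shows "(\<lambda>m. x m * y m mod q ^ m) \<noteq> (\<lambda>m. 0)"
proof
  assume z: "(\<lambda>m. x m * y m mod q ^ m) = (\<lambda>m. 0)"
  have q0: "q > 0" using q prime_gt_0_int by blast
  obtain a where a1: "a \<ge> 1" and ha: "\<And>M. M \<ge> a \<Longrightarrow> q ^ (a - 1) dvd x M \<and> \<not> q ^ a dvd x M"
    using padic_seq_val[OF hx q0 nx] by blast
  obtain b where b1: "b \<ge> 1" and hb: "\<And>M. M \<ge> b \<Longrightarrow> q ^ (b - 1) dvd y M \<and> \<not> q ^ b dvd y M"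
    using padic_seq_val[OF hy q0 ny] by blast
  define M where "M = a + b"
  obtain u where u: "x M = q ^ (a - 1) * u" using ha[of M] M_def by (auto elim: dvdE)
  obtain w where w: "y M = q ^ (b - 1) * w" using hb[of M] M_def by (auto elim: dvdE)
  have nu: "\<not> q dvd u"
  proof
    assume "q dvd u"
    then have "q ^ (a - 1) * q dvd x M" using u by simp
    then show False using ha[of M] M_def a1 by (simp add: power_Suc2[symmetric])
  qed
  have nw: "\<not> q dvd w"
  proof
    assume "q dvd w"
    then have "q ^ (b - 1) * q dvd y M" using w by simp
    then show False using hb[of M] M_def b1 by (simp add: power_Suc2[symmetric])
  qed
  have "q ^ M dvd x M * y M" using fun_cong[OF z, of M] by (simp add: mod_eq_0_iff_dvd)
  moreover have "q ^ M = q ^ (a - 1) * q ^ (b - 1) * (q * q)"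
  proof -
    have "M = (a - 1) + (b - 1) + 2" using a1 b1 unfolding M_def by simp
    then show ?thesis by (simp only: power_add power2_eq_square)
  qed
  moreover have "x M * y M = q ^ (a - 1) * q ^ (b - 1) * (u * w)" using u w by simp
  ultimately have d: "q ^ (a - 1) * q ^ (b - 1) * (q * q) dvd q ^ (a - 1) * q ^ (b - 1) * (u * w)"
    by simp
  have c0: "q ^ (a - 1) * q ^ (b - 1) \<noteq> 0" using q0 by simp
  have "q * q dvd u * w" using d c0 by (simp only: dvd_mult_cancel_left) simp
  then have "q dvd u * w" using dvd_mult_left by blast
  then show False using nu nw q by (simp add: prime_dvd_mult_iff)
qed

instance padic :: (prime_card_type) idom
proof
  fix a b :: "'a padic"
  show "a \<noteq> 0 \<Longrightarrow> b \<noteq> 0 \<Longrightarrow> a * b \<noteq> 0"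
  proof transfer
    fix x y
    assume "padic_seq (int CARD('a)) x" "padic_seq (int CARD('a)) y" "x \<noteq> (\<lambda>m. 0)" "y \<noteq> (\<lambda>m. 0)"
    then show "(\<lambda>m. x m * y m mod int CARD('a) ^ m) \<noteq> (\<lambda>m. 0)"
      using padic_seq_no_zero_div[of "int CARD('a)" x y] prime_card_type[where 'a='a] by simp
  qed
qed

definition piter :: "'a::comm_semiring_1 poly \<Rightarrow> nat \<Rightarrow> 'a poly" where
  "piter f k = ((\<lambda>g. pcompose f g) ^^ k) [:0, 1:]"

definition pcong :: "nat \<Rightarrow> 'p::prime_card_type padic \<Rightarrow> 'p padic \<Rightarrow> bool" where
  "pcong n a b \<longleftrightarrow> (of_nat CARD('p) :: 'p padic) ^ n dvd (a - b)"

definition is_cycle :: "'p::prime_card_type padic poly \<Rightarrow> nat \<Rightarrow> nat \<Rightarrow> (nat \<Rightarrow> 'p padic) \<Rightarrow> bool" where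
  "is_cycle f n k x \<longleftrightarrow> k \<ge> 1 \<and>
     (\<forall>i<k. \<forall>j<k. i \<noteq> j \<longrightarrow> \<not> pcong n (x i) (x j)) \<and>
     (\<forall>i<k. pcong n (poly f (x i)) (x ((i + 1) mod k)))"

definition is_lift :: "'p::prime_card_type padic poly \<Rightarrow> nat \<Rightarrow> nat \<Rightarrow> (nat \<Rightarrow> 'p padic) \<Rightarrow>
    nat \<Rightarrow> (nat \<Rightarrow> 'p padic) \<Rightarrow> bool" where
  "is_lift f n k x l y \<longleftrightarrow> is_cycle f (Suc n) l y \<and>
     (\<forall>j<l. \<exists>i<k. pcong n (y j) (x i))"

end

theory Submission imports Defs begin

lemma poly_diff_dvd: "(x - y) dvd (poly p x - poly p (y::'a::comm_ring_1))"
proof (induction p rule: pCons_induct)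
  case 0 then show ?case by simp
next
  case (pCons c p)
  have "poly (pCons c p) x - poly (pCons c p) y = x * (poly p x - poly p y) + (x - y) * poly p y"
    by (simp add: algebra_simps)
  then show ?case using pCons.IH by (simp add: dvd_add dvd_mult)
qed

lemma poly_taylor_dvd:
  "h^2 dvd (poly p (x+h) - poly p x - h * poly (pderiv p) (x::'a::idom))"
proof (induction p rule: pCons_induct)
  case 0 then show ?case by simp
next
  case (pCons c p)
  have "poly (pCons c p) (x+h) - poly (pCons c p) x - h * poly (pderiv (pCons c p)) x
     = x * (poly p (x+h) - poly p x - h * poly (pderiv p) x) + h * (poly p (x+h) - poly p x)"
    by (simp add: pderiv_pCons algebra_simps)
  moreover have "h^2 dvd h * (poly p (x+h) - poly p x)"
    using poly_diff_dvd[of "x+h" x p] by (simp add: power2_eq_square)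
  ultimately show ?case using pCons.IH by (simp add: dvd_add dvd_mult)
qed

lemma pcompose_idL': "pcompose [:0, 1:] p = (p::'a::comm_semiring_1 poly)"
proof -
  have "smult 1 p = p" by (rule poly_eqI) simp
  then show ?thesis by (simp add: pcompose_pCons)
qed

lemma piter_Suc: "piter f (Suc k) = pcompose f (piter f k)"
  by (simp add: piter_def)

lemma piter_0: "piter f 0 = [:0, 1:]"
  by (simp add: piter_def)

lemma poly_piter: "poly (piter f k) = poly f ^^ k"
  by (induction k) (auto simp: piter_0 piter_Suc poly_pcompose)

lemma piter_add: "piter f (a + b) = pcompose (piter f a) (piter f b)"
  by (induction a) (simp_all add: piter_0 piter_Suc pcompose_idL' pcompose_assoc)

lemma rep_of_nat: "rep_padic (of_nat j :: 'p::prime_card_type padic) m = int j mod int CARD('p) ^ m"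
proof (induction j)
  case 0 then show ?case by (simp add: zero_padic.rep_eq)
next
  case (Suc j)
  show ?case by (simp add: plus_padic.rep_eq one_padic.rep_eq Suc mod_add_eq add.commute)
qed

lemma p_nonzero: "(of_nat CARD('p) :: 'p::prime_card_type padic) \<noteq> 0"
proof
  assume "(of_nat CARD('p) :: 'p padic) = 0"
  then have "rep_padic (of_nat CARD('p) :: 'p padic) 2 = rep_padic (0::'p padic) 2" by simp
  then have "int CARD('p) mod int CARD('p) ^ 2 = 0" by (simp add: rep_of_nat zero_padic.rep_eq)
  moreover have "int CARD('p) < int CARD('p) ^ 2" "0 < int CARD('p)"
    using card_ge2[where 'a='p] by (simp_all add: power2_eq_square)
  ultimately show False by simp
qed

lemma pcong_trans: "pcong n a b \<Longrightarrow> pcong n b c \<Longrightarrow> pcong n a c"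
  unfolding pcong_def
proof -
  assume "of_nat CARD('a) ^ n dvd a - b" "of_nat CARD('a) ^ n dvd b - c"
  moreover have "a - c = (a - b) + (b - c)" by simp
  ultimately show "of_nat CARD('a) ^ n dvd a - c" by (metis dvd_add)
qed

lemma cyc_iter:
  assumes "is_cycle f n k x" "i < k"
  shows "pcong n ((poly f ^^ j) (x i)) (x ((i + j) mod k))"
proof (induction j)
  case 0 then show ?case using assms(2) by (simp add: pcong_def)
next
  case (Suc j)
  have k1: "k \<ge> 1" using assms(1) by (simp add: is_cycle_def)
  have l: "(i + j) mod k < k" using k1 by simp
  have "pcong n ((poly f ^^ Suc j) (x i)) (poly f (x ((i + j) mod k)))"
    using Suc.IH poly_diff_dvd[of "(poly f ^^ j) (x i)" "x ((i + j) mod k)" f]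
    unfolding pcong_def by (auto intro: dvd_trans)
  moreover have "pcong n (poly f (x ((i + j) mod k))) (x (((i + j) mod k + 1) mod k))"
    using assms(1) l by (simp add: is_cycle_def)
  moreover have "((i + j) mod k + 1) mod k = (i + Suc j) mod k"
    by (simp add: mod_Suc_eq)
  ultimately show ?case using pcong_trans by metis
qed

lemma iter_lin:
  fixes g :: "'a::idom poly"
  assumes "poly g X = X + m * b"
  shows "\<exists>c. (poly g ^^ j) (X + m * t) = X + m * c \<and>
     m dvd c - ((poly (pderiv g) X) ^ j * t + b * (\<Sum>l<j. (poly (pderiv g) X) ^ l))"
proof (induction j)
  case 0 show ?case by (rule exI[of _ t]) simp
next
  case (Suc j)
  define a where "a = poly (pderiv g) X"
  from Suc.IH obtain c where c1: "(poly g ^^ j) (X + m * t) = X + m * c"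
    and c2: "m dvd c - (a ^ j * t + b * (\<Sum>l<j. a ^ l))" unfolding a_def by blast
  have "(m * c)^2 dvd poly g (X + m * c) - poly g X - m * c * a"
    using poly_taylor_dvd[of "m * c" g X] unfolding a_def by simp
  then have "m^2 dvd poly g (X + m * c) - poly g X - m * c * a"
    by (metis dvd_mult_left power_mult_distrib)
  then obtain e where e: "poly g (X + m * c) - poly g X - m * c * a = m^2 * e" by (auto elim: dvdE)
  have eq: "(poly g ^^ Suc j) (X + m * t) = X + m * (b + a * c + m * e)"
  proof -
    have "(poly g ^^ Suc j) (X + m * t) = poly g (X + m * c)" using c1 by simp
    also have "\<dots> = poly g X + m * c * a + m^2 * e" using e by (simp add: algebra_simps)
    also have "\<dots> = X + m * (b + a * c + m * e)" using assms by (simp add: algebra_simps power2_eq_square)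
    finally show ?thesis .
  qed
  have S: "(\<Sum>l<Suc j. a ^ l) = 1 + a * (\<Sum>l<j. a ^ l)"
    by (simp only: sum.lessThan_Suc_shift power_0 power_Suc sum_distrib_left)
  have eqd: "(b + a * c + m * e) - (a ^ Suc j * t + b * (\<Sum>l<Suc j. a ^ l))
      = a * (c - (a ^ j * t + b * (\<Sum>l<j. a ^ l))) + m * e"
    unfolding S by (simp add: algebra_simps)
  then have "m dvd (b + a * c + m * e) - (a ^ Suc j * t + b * (\<Sum>l<Suc j. a ^ l))"
    unfolding eqd by (intro dvd_add dvd_mult c2 dvd_triv_left)
  then show ?case using eq unfolding a_def by blast
qed

lemma deriv_prod:
  "poly (pderiv (piter f (k * r))) w =
    (\<Prod>j<r. poly (pderiv (piter f k)) ((poly (piter f k) ^^ j) w))"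
proof (induction r)
  case 0 then show ?case by (simp add: piter_0 pderiv_pCons)
next
  case (Suc r)
  have "piter f (k * Suc r) = pcompose (piter f k) (piter f (k * r))"
    by (simp add: piter_add[symmetric])
  moreover have "poly (piter f (k * r)) w = (poly (piter f k) ^^ r) w"
    by (simp add: poly_piter funpow_mult)
  ultimately show ?case using Suc.IH
    by (simp add: pderiv_pcompose poly_pcompose mult.commute)
qed

theorem lemma2p3:
  fixes f :: "'p::prime_card_type padic poly"
    and n k r :: nat
    and x y :: "nat \<Rightarrow> 'p padic"
  assumes "n \<ge> 1"
    and "is_cycle f n k x"
    and "r \<ge> 1"
    and "is_lift f n k x (k * r) y"
  shows "\<forall>i<k. \<forall>t\<in>{0..CARD('p) - 1}.
     (let z = x i + (of_nat CARD('p)) ^ n * of_nat t;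
          an = poly (pderiv (piter f k)) (x i);
          an1 = poly (pderiv (piter f (k * r))) z
      in pcong n an1 (an ^ r) \<and>
         (\<forall>bn pbn1. (of_nat CARD('p)) ^ n * bn = (poly f ^^ k) (x i) - x i \<longrightarrow>
                     (of_nat CARD('p)) ^ n * pbn1 = (poly f ^^ (k * r)) z - z \<longrightarrow>
                     pcong n pbn1 (of_nat t * (an ^ r - 1) + bn * (\<Sum>j<r. an ^ j))))"
  unfolding Let_def
proof (intro allI impI ballI conjI)
  fix i t assume i: "i < k"
  define m where "m = (of_nat CARD('p) :: 'p padic) ^ n"
  define G where "G = piter f k"
  define X where "X = x i"
  define a where "a = poly (pderiv G) X"
  define z where "z = X + m * of_nat t"
  have pG: "poly G = poly f ^^ k" unfolding G_def by (rule poly_piter)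
  have pGr: "poly f ^^ (k * r) = poly G ^^ r" unfolding pG by (simp add: funpow_mult)
  have m0: "m \<noteq> 0" unfolding m_def using p_nonzero[where 'p='p] by simp
  have "pcong n ((poly f ^^ k) (x i)) (x ((i + k) mod k))"
    using cyc_iter[OF assms(2) i] .
  then have "m dvd poly G X - X" using i unfolding pG X_def m_def pcong_def by simp
  then obtain b where "poly G X - X = m * b" by (auto elim!: dvdE)
  then have b: "poly G X = X + m * b" by (metis diff_add_cancel add.commute)
  have congj: "m dvd poly (pderiv G) ((poly G ^^ j) z) - a" for j
  proof -
    obtain c where c: "(poly G ^^ j) z = X + m * c"
      using iter_lin[of G X m b j "of_nat t"] b unfolding z_def by blast
    show ?thesis using poly_diff_dvd[of "(poly G ^^ j) z" X "pderiv G"] unfolding c a_def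
      by (auto intro: dvd_trans)
  qed
  have prodc: "m dvd (\<Prod>j<s. poly (pderiv G) ((poly G ^^ j) z)) - a ^ s" for s
  proof (induction s)
    case 0 then show ?case by simp
  next
    case (Suc s)
    define u where "u = poly (pderiv G) ((poly G ^^ s) z)"
    define P where "P = (\<Prod>j<s. poly (pderiv G) ((poly G ^^ j) z))"
    have "(\<Prod>j<Suc s. poly (pderiv G) ((poly G ^^ j) z)) - a ^ Suc s
        = (u - a) * P + a * (P - a ^ s)"
      unfolding u_def P_def by (simp add: algebra_simps)
    moreover have "m dvd u - a" unfolding u_def by (rule congj)
    moreover have "m dvd P - a ^ s" unfolding P_def by (rule Suc.IH)
    ultimately show ?case by (metis dvd_add dvd_mult dvd_mult2)
  qed
  show "pcong n (poly (pderiv (piter f (k * r))) (x i + of_nat CARD('p) ^ n * of_nat t))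
                (poly (pderiv (piter f k)) (x i) ^ r)"
    using prodc[of r] deriv_prod[of f k r z]
    unfolding pcong_def m_def[symmetric] G_def[symmetric] X_def[symmetric] z_def[symmetric] a_def
    by simp
  fix bn pbn1
  assume h1: "of_nat CARD('p) ^ n * bn = (poly f ^^ k) (x i) - x i"
    and h2: "of_nat CARD('p) ^ n * pbn1 = (poly f ^^ (k * r)) (x i + of_nat CARD('p) ^ n * of_nat t) -
       (x i + of_nat CARD('p) ^ n * of_nat t)"
  have bn: "poly G X = X + m * bn" using h1 unfolding pG m_def X_def by (metis diff_add_cancel add.commute)
  obtain c where c1: "(poly G ^^ r) z = X + m * c"
    and c2: "m dvd c - (a ^ r * of_nat t + bn * (\<Sum>l<r. a ^ l))"
    using iter_lin[OF bn, of r "of_nat t"] unfolding z_def a_def by blast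
  have "m * pbn1 = m * (c - of_nat t)"
    using h2 c1 unfolding m_def[symmetric] X_def[symmetric] z_def[symmetric] pGr
    by (simp add: z_def algebra_simps)
  then have pb: "pbn1 = c - of_nat t" using m0 by simp
  have E: "pbn1 - (of_nat t * (a ^ r - 1) + bn * (\<Sum>j<r. a ^ j))
      = c - (a ^ r * of_nat t + bn * (\<Sum>l<r. a ^ l))"
    unfolding pb by (simp add: algebra_simps)
  show "pcong n pbn1 (of_nat t * (poly (pderiv (piter f k)) (x i) ^ r - 1) +
      bn * (\<Sum>j<r. poly (pderiv (piter f k)) (x i) ^ j))"
    unfolding pcong_def m_def[symmetric] G_def[symmetric] X_def[symmetric]
    unfolding a_def[symmetric] E by (rule c2)
qed

end
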